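(* Let $\gamma$ be a three-mode CM satisfying $\gamma-i\tilde J_x\ge0$ for all $x\in\{0,A,B,C\}$. Then $\gamma$ is an edge CM if and only if $\gamma$ is not of the form $\gamma_A\oplus\gamma_B\oplus\gamma_C$ for one-mode CMs $\gamma_A,\gamma_B,\gamma_C$, and $K(\gamma)=\mathbb{R}^6$.
   Context: Conventions: Three modes $A,B,C$, phase-space vectors ordered mode-wise as $(q_A,p_A,q_B,p_B,q_C,p_C)$. $J_1=\begin{pmatrix}0&-1\\1&0\end{pmatrix}$, $J=J_1\oplus J_1\oplus J_1$. A CM of $n$ modes is a real symmetric $2n\times2n$ matrix $\gamma>0$ with $\gamma-iJ\ge0$. $X\ge Y$ means $X-Y$ is positive semidefinite. For $x\in\{A,B,C\}$, $\tilde J_x$ is $J$ with the $2\times2$ diagonal block of mode $x$ replaced by $-J_1$, and $\tilde J_0=J$. A three-mode CM is fully separable if there exist one-mode CMs $\gamma_A,\gamma_B,\gamma_C$ with $\gamma\ge\gamma_A\oplus\gamma_B\oplus\gamma_C$. Edge CM: a three-mode CM $\gamma$ that is not fully separable, satisfies $\gamma-i\tilde J_x\ge0$ for all $x\in\{0,A,B,C\}$, and such that for every real symmetric matrix $P\ge0$, $P\ne0$, the matrix $\gamma-P$ violates $\gamma-P-i\tilde J_x\ge0$ for some $x\in\{0,A,B,C\}$. $K(\gamma)\subseteq\mathbb{R}^6$: let $V\subseteq\mathbb{C}^6$ be the complex span of $\bigcup_{x\in\{0,A,B,C\}}\ker(\gamma-i\tilde J_x)$; $K(\gamma)$ is the real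 linear span of the real parts and imaginary parts of all vectors in $V$. *)

theory Defs
  imports "HOL-Analysis.Analysis"
begin

(* Phase-space index type 6 = {0,...,5}, ordered (q_A,p_A,q_B,p_B,q_C,p_C).
   Single-mode index type 2 = {0,1}, ordered (q,p). *)

definition symmetric_mat :: "real^'n^'n \<Rightarrow> bool" where
  "symmetric_mat M \<longleftrightarrow> transpose M = M"

definition psd_real :: "real^'n^'n \<Rightarrow> bool" where
  "psd_real M \<longleftrightarrow> symmetric_mat M \<and> (\<forall>x. 0 \<le> x \<bullet> (M *v x))"

definition pd_real :: "real^'n^'n \<Rightarrow> bool" where
  "pd_real M \<longleftrightarrow> symmetric_mat M \<and> (\<forall>x. x \<noteq> 0 \<longrightarrow> 0 < x \<bullet> (M *v x))"

definition hermitian_mat :: "complex^'n^'n \<Rightarrow> bool" where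
  "hermitian_mat M \<longleftrightarrow> (\<forall>i j. M $ j $ i = cnj (M $ i $ j))"

definition psd_complex :: "complex^'n^'n \<Rightarrow> bool" where
  "psd_complex M \<longleftrightarrow> hermitian_mat M \<and>
     (\<forall>v. 0 \<le> Re (\<Sum>i\<in>UNIV. cnj (v $ i) * (M *v v) $ i))"

definition minus_iJ :: "real^'n^'n \<Rightarrow> real^'n^'n \<Rightarrow> complex^'n^'n" where
  "minus_iJ X Y = (\<chi> i j. complex_of_real (X $ i $ j) - \<i> * complex_of_real (Y $ i $ j))"

definition is_CM :: "real^'n^'n \<Rightarrow> real^'n^'n \<Rightarrow> bool" where
  "is_CM Jm g \<longleftrightarrow> pd_real g \<and> psd_complex (minus_iJ g Jm)"

definition J1 :: "real^2^2" where
  "J1 = (\<chi> i j. if i = 0 \<and> j = 1 then -1 else if i = 1 \<and> j = 0 then 1 else 0)"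

definition one_mode_CM :: "real^2^2 \<Rightarrow> bool" where
  "one_mode_CM g \<longleftrightarrow> is_CM J1 g"

definition mode_of :: "6 \<Rightarrow> nat" where
  "mode_of i = (if i = 0 \<or> i = 1 then 0 else if i = 2 \<or> i = 3 then 1 else 2)"

definition pos_of :: "6 \<Rightarrow> 2" where
  "pos_of i = (if i = 0 \<or> i = 2 \<or> i = 4 then 0 else 1)"

definition dsum3 :: "real^2^2 \<Rightarrow> real^2^2 \<Rightarrow> real^2^2 \<Rightarrow> real^6^6" where
  "dsum3 a b c = (\<chi> i j. if mode_of i = mode_of j then
      (if mode_of i = 0 then a else if mode_of i = 1 then b else c) $ pos_of i $ pos_of j
    else 0)"

definition J3 :: "real^6^6" where
  "J3 = dsum3 J1 J1 J1"

definition three_mode_CM :: "real^6^6 \<Rightarrow> bool" where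
  "three_mode_CM g \<longleftrightarrow> is_CM J3 g"

datatype partyx = X0 | XA | XB | XC

fun Jt :: "partyx \<Rightarrow> real^6^6" where
  "Jt X0 = dsum3 J1 J1 J1"
| "Jt XA = dsum3 (- J1) J1 J1"
| "Jt XB = dsum3 J1 (- J1) J1"
| "Jt XC = dsum3 J1 J1 (- J1)"

definition fully_separable :: "real^6^6 \<Rightarrow> bool" where
  "fully_separable g \<longleftrightarrow> (\<exists>gA gB gC. one_mode_CM gA \<and> one_mode_CM gB \<and> one_mode_CM gC \<and>
      psd_real (g - dsum3 gA gB gC))"

definition edge_CM :: "real^6^6 \<Rightarrow> bool" where
  "edge_CM g \<longleftrightarrow> three_mode_CM g \<and> \<not> fully_separable g \<and>
     (\<forall>x. psd_complex (minus_iJ g (Jt x))) \<and>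
     (\<forall>P. symmetric_mat P \<and> psd_real P \<and> P \<noteq> 0 \<longrightarrow>
        (\<exists>x. \<not> psd_complex (minus_iJ (g - P) (Jt x))))"

definition ker_c :: "complex^'n^'n \<Rightarrow> (complex^'n) set" where
  "ker_c M = {v. M *v v = 0}"

definition re_vec :: "complex^'n \<Rightarrow> real^'n" where
  "re_vec v = (\<chi> i. Re (v $ i))"

definition im_vec :: "complex^'n \<Rightarrow> real^'n" where
  "im_vec v = (\<chi> i. Im (v $ i))"

definition V_space :: "real^6^6 \<Rightarrow> (complex^6) set" where
  "V_space g = vec.span (\<Union>x. ker_c (minus_iJ g (Jt x)))"

definition K_space :: "real^6^6 \<Rightarrow> (real^6) set" where
  "K_space g = span (re_vec ` V_space g \<union> im_vec ` V_space g)"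

end

theory Submission
  imports Defs
begin

definition sq :: "complex^'n^'n \<Rightarrow> complex^'n \<Rightarrow> complex^'n \<Rightarrow> complex" where
  "sq M a b = (\<Sum>i\<in>UNIV. cnj (a$i) * (\<Sum>j\<in>UNIV. M$i$j * b$j))"

lemma psd_complex_sq: "psd_complex M \<longleftrightarrow> hermitian_mat M \<and> (\<forall>v. 0 \<le> Re (sq M v v))"
  by (simp add: psd_complex_def sq_def matrix_vector_mult_def)

lemma sq_herm: assumes "hermitian_mat M" shows "sq M a b = cnj (sq M b a)"
proof -
  have "cnj (sq M b a) = (\<Sum>i\<in>UNIV. \<Sum>j\<in>UNIV. b$i * cnj (M$i$j) * cnj (a$j))"
    by (simp add: sq_def sum_distrib_left mult.assoc)
  also have "\<dots> = (\<Sum>j\<in>UNIV. \<Sum>i\<in>UNIV. b$i * cnj (M$i$j) * cnj (a$j))"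
    by (rule sum.swap)
  also have "\<dots> = sq M a b"
  proof -
    have h: "cnj (M$i$j) = M$j$i" for i j
      using assms unfolding hermitian_mat_def by (metis complex_cnj_cnj)
    show ?thesis by (simp add: sq_def sum_distrib_left h mult_ac)
  qed
  finally show ?thesis by simp
qed

lemma sq_add_left: "sq M (a + c) b = sq M a b + sq M c b"
  by (simp add: sq_def distrib_right sum.distrib)
lemma sq_add_right: "sq M a (b + c) = sq M a b + sq M a c"
  by (simp add: sq_def distrib_left distrib_right sum.distrib)
lemma sq_scaleR_left: "sq M (t *\<^sub>R a) b = of_real t * sq M a b"
  by (simp add: sq_def vector_scaleR_component scaleR_conv_of_real[of t "a$i" for i] sum_distrib_left mult_ac)
lemma sq_scaleR_right: "sq M a (t *\<^sub>R b) = of_real t * sq M a b"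
  by (simp add: sq_def vector_scaleR_component scaleR_conv_of_real[of t "b$i" for i] sum_distrib_left mult_ac)
lemma sq_mv: "sq M a b = (\<Sum>i\<in>UNIV. cnj (a$i) * (M *v b)$i)"
  by (simp add: sq_def matrix_vector_mult_def)
lemma sq_diff_mat: "sq (A - B) a b = sq A a b - sq B a b"
  by (simp add: sq_def algebra_simps sum_subtractf)
lemma sq_ker: "M *v b = 0 \<Longrightarrow> sq M a b = 0"
  by (simp add: sq_def matrix_vector_mult_def vec_eq_iff)
lemma psd_zero_ker:
  assumes P: "psd_complex M" and z: "Re (sq M v v) = 0"
  shows "M *v v = 0"
proof -
  let ?u = "M *v v"
  have H: "hermitian_mat M" and pos: "\<And>x. 0 \<le> Re (sq M x x)" using P by (auto simp: psd_complex_sq)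
  have uv: "sq M ?u v = of_real (\<Sum>i\<in>UNIV. (cmod (?u$i))^2)"
    unfolding sq_mv of_real_sum by (rule sum.cong, simp, simp only: complex_norm_square mult.commute)
  define N where "N = (\<Sum>i\<in>UNIV. (cmod (?u$i))^2)"
  define R where "R = Re (sq M ?u ?u)"
  have R0: "R \<ge> 0" using pos R_def by auto
  have N0: "N \<ge> 0" unfolding N_def by (auto intro: sum_nonneg)
  have exp: "Re (sq M (v + s *\<^sub>R ?u) (v + s *\<^sub>R ?u)) = 2 * s * N + s^2 * R" for s
  proof -
    have "sq M v ?u = cnj (sq M ?u v)" using sq_herm[OF H] by blast
    then show ?thesis
      using z uv unfolding N_def R_def
      by (simp add: sq_add_left sq_add_right sq_scaleR_left sq_scaleR_right power2_eq_square distrib_left)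
  qed
  define s where "s = - N / (R + 1)"
  have "0 \<le> 2 * s * N + s^2 * R" using pos[of "v + s *\<^sub>R ?u"] exp by simp
  hence A: "0 \<le> (R+1)^2 * (2 * s * N + s^2 * R)" by simp
  have "(R+1)^2 * (2 * s * N + s^2 * R) = - (N^2 * (R + 2))"
  proof -
    have ne: "R + 1 \<noteq> 0" using R0 by simp
    have sR: "s * (R+1) = -N" using ne by (simp add: s_def)
    have "(R+1)^2 * (2 * s * N + s^2 * R) = 2*N*(s*(R+1))*(R+1) + (s*(R+1))^2 * R"
      by (simp add: power2_eq_square algebra_simps)
    also have "\<dots> = - (N^2 * (R + 2))" unfolding sR by (simp add: power2_eq_square algebra_simps)
    finally show ?thesis .
  qed
  with A have "N^2 * (R + 2) \<le> 0" by linarith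
  hence "N^2 \<le> 0" using R0
    by (metis add_nonneg_pos mult_le_0_iff not_le zero_less_numeral zero_le_power2 antisym)
  hence "N = 0" by simp
  hence "\<forall>i. cmod (?u$i) ^2 = 0" unfolding N_def
    using sum_nonneg_eq_0_iff[of UNIV "\<lambda>i. (cmod (?u$i))^2"] by simp
  thus ?thesis by (simp add: vec_eq_iff)
qed

definition cm :: "real^'n^'n \<Rightarrow> complex^'n^'n" where "cm P = (\<chi> i j. of_real (P$i$j))"

lemma minus_iJ_diff: "minus_iJ (g - P) J = minus_iJ g J - cm P"
  by (simp add: minus_iJ_def cm_def vec_eq_iff)

lemma Re_sq_cm: "Re (sq (cm P) v v) = re_vec v \<bullet> (P *v re_vec v) + im_vec v \<bullet> (P *v im_vec v)"
proof -
  have 1: "re_vec v \<bullet> (P *v re_vec v) = (\<Sum>i\<in>UNIV. \<Sum>j\<in>UNIV. P$i$j * (Re (v$i) * Re (v$j)))"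
    unfolding inner_vec_def matrix_vector_mult_def re_vec_def
    by (simp add: sum_distrib_left mult_ac)
  have 2: "im_vec v \<bullet> (P *v im_vec v) = (\<Sum>i\<in>UNIV. \<Sum>j\<in>UNIV. P$i$j * (Im (v$i) * Im (v$j)))"
    unfolding inner_vec_def matrix_vector_mult_def im_vec_def
    by (simp add: sum_distrib_left mult_ac)
  have 3: "Re (sq (cm P) v v) = (\<Sum>i\<in>UNIV. \<Sum>j\<in>UNIV. P$i$j * (Re (v$i) * Re (v$j)) + P$i$j * (Im (v$i) * Im (v$j)))"
    unfolding sq_def cm_def Re_sum
    by (simp add: sum_distrib_left Re_sum algebra_simps)
  show ?thesis unfolding 1 2 3 by (simp add: sum.distrib)
qed

lemma cm_mv_re: "P *v re_vec v = re_vec (cm P *v v)"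
  by (simp add: cm_def re_vec_def matrix_vector_mult_def vec_eq_iff Re_sum)
lemma cm_mv_im: "P *v im_vec v = im_vec (cm P *v v)"
  by (simp add: cm_def im_vec_def matrix_vector_mult_def vec_eq_iff Im_sum)

lemma herm_cm: "symmetric_mat P \<Longrightarrow> hermitian_mat (cm P)"
  unfolding hermitian_mat_def
  by (simp add: symmetric_mat_def cm_def vec_eq_iff transpose_def)

lemma psd_cm: "psd_real P \<Longrightarrow> psd_complex (cm P)"
  unfolding psd_complex_sq using herm_cm Re_sq_cm
  by (metis add_nonneg_nonneg psd_real_def)

lemma herm_diff: "hermitian_mat A \<Longrightarrow> hermitian_mat B \<Longrightarrow> hermitian_mat (A - B)"
  unfolding hermitian_mat_def by (metis complex_cnj_diff vector_minus_component)

lemma real_subspace_ker: "subspace {x::real^'n. P *v x = 0}"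
  unfolding subspace_def
  by (simp add: matrix_vector_right_distrib linear_cmul[OF matrix_vector_mul_linear])

lemma re_vec_0: "re_vec 0 = 0" and im_vec_0: "im_vec 0 = 0"
  by (simp_all add: re_vec_def im_vec_def vec_eq_iff)

lemma K_kills:
  fixes g P :: "real^6^6"
  assumes K: "K_space g = UNIV" and Pp: "psd_real P"
   and h2: "\<forall>x. psd_complex (minus_iJ (g - P) (Jt x))"
  shows "P = 0"
proof -
  have pc: "psd_complex (cm P)" using Pp by (rule psd_cm)
  have ker: "cm P *v v = 0" if "v \<in> ker_c (minus_iJ g (Jt x))" for v x
  proof -
    have "minus_iJ g (Jt x) *v v = 0" using that by (simp add: ker_c_def)
    hence "sq (minus_iJ g (Jt x)) v v = 0" by (rule sq_ker)
    moreover have "0 \<le> Re (sq (minus_iJ (g - P) (Jt x)) v v)" using h2 by (simp add: psd_complex_sq)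
    moreover have "0 \<le> Re (sq (cm P) v v)" using pc by (simp add: psd_complex_sq)
    ultimately have "Re (sq (cm P) v v) = 0" by (simp add: minus_iJ_diff sq_diff_mat)
    thus ?thesis by (rule psd_zero_ker[OF pc])
  qed
  have V: "V_space g \<subseteq> {v. cm P *v v = 0}" unfolding V_space_def
    by (rule vec.span_minimal) (use ker vec.subspace_kernel in auto)
  have "re_vec v \<in> {x. P *v x = 0}" "im_vec v \<in> {x. P *v x = 0}" if "v \<in> V_space g" for v
    using V that by (auto simp: cm_mv_re cm_mv_im re_vec_0 im_vec_0)
  hence "K_space g \<subseteq> {x. P *v x = 0}" unfolding K_space_def
    by (intro span_minimal real_subspace_ker) auto
  hence "\<forall>x. P *v x = 0 *v x" using K by auto
  thus "P = 0" by (simp add: matrix_eq)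
qed

lemma exhaust_6:
  fixes x :: 6
  shows "x = 0 \<or> x = 1 \<or> x = 2 \<or> x = 3 \<or> x = 4 \<or> x = 5"
proof (induct x)
  case (of_int z)
  then have "z = 0 \<or> z = 1 \<or> z = 2 \<or> z = 3 \<or> z = 4 \<or> z = 5" by fastforce
  then show ?case by auto
qed
lemma exhaust_2':
  fixes x :: 2
  shows "x = 0 \<or> x = 1"
proof (induct x)
  case (of_int z)
  then have "z = 0 \<or> z = 1" by fastforce
  then show ?case by auto
qed
lemma UNIV_6: "(UNIV::6 set) = {0,1,2,3,4,5}"
  using exhaust_6 by auto
lemma UNIV_2': "(UNIV::2 set) = {0,1}"
  using exhaust_2' by auto
lemma sum_6: "sum f (UNIV::6 set) = f 0 + f 1 + f 2 + f 3 + f 4 + f 5"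
  unfolding UNIV_6 by (simp add: ac_simps)
lemma sum_2': "sum f (UNIV::2 set) = f 0 + f 1"
  unfolding UNIV_2' by (simp add: ac_simps)

definition wsum :: "real^'n \<Rightarrow> complex^'n \<Rightarrow> complex" where
  "wsum w v = (\<Sum>i\<in>UNIV. of_real (w$i) * v$i)"

lemma wsum_add: "wsum w (a + b) = wsum w a + wsum w b"
  by (simp add: wsum_def distrib_left sum.distrib)

lemma wsum_bound: "cmod (wsum w z) \<le> norm w * norm z"
proof -
  have "cmod (wsum w z) \<le> (\<Sum>i\<in>UNIV. cmod (of_real (w$i) * z$i))" unfolding wsum_def by (rule norm_sum)
  also have "\<dots> = (\<Sum>i\<in>UNIV. \<bar>norm (w$i)\<bar> * \<bar>norm (z$i)\<bar>)" by (simp add: norm_mult)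
  also have "\<dots> \<le> L2_set (\<lambda>i. norm (w$i)) UNIV * L2_set (\<lambda>i. norm (z$i)) UNIV" by (rule L2_set_mult_ineq)
  also have "\<dots> = norm w * norm z" by (simp add: norm_vec_def)
  finally show ?thesis .
qed

lemma sq_scale_both: "Re (sq M (t *\<^sub>R z) (t *\<^sub>R z)) = t^2 * Re (sq M z z)"
  by (simp add: sq_scaleR_left sq_scaleR_right power2_eq_square)

lemma cont_sq: "continuous_on T (\<lambda>z. Re (sq M z z))"
  unfolding sq_def by (intro continuous_intros)

lemma eps_bound:
  fixes M :: "complex^'n^'n" and w :: "real^'n"
  assumes P: "psd_complex M" and W: "\<forall>v. M *v v = 0 \<longrightarrow> wsum w v = 0"
  shows "\<exists>e>0. \<forall>v. e * (cmod (wsum w v))^2 \<le> Re (sq M v v)"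
proof -
  have H: "hermitian_mat M" and pos: "\<And>x. 0 \<le> Re (sq M x x)" using P by (auto simp: psd_complex_sq)
  define N where "N = {v::complex^'n. M *v v = 0}"
  have subN: "subspace N" unfolding N_def subspace_def
    by (simp add: matrix_vector_right_distrib linear_cmul[OF matrix_vector_mul_linear])
  define T where "T = {z::complex^'n. norm z = 1 \<and> (\<forall>a\<in>N. a \<bullet> z = 0)}"
  have cT: "compact T"
  proof -
    have "T = sphere 0 1 \<inter> (\<Inter>a\<in>N. {z. a \<bullet> z = 0})" unfolding T_def by auto
    moreover have "closed (\<Inter>a\<in>N. {z. a \<bullet> z = 0})" by (intro closed_INT ballI closed_hyperplane)
    ultimately show ?thesis using compact_sphere by (simp add: compact_Int_closed)
  qed
  have lower: "\<exists>c>0. \<forall>z. (\<forall>a\<in>N. a \<bullet> z = 0) \<longrightarrow> c * (norm z)^2 \<le> Re (sq M z z)"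
  proof (cases "T = {}")
    case True
    have "z = 0" if "\<forall>a\<in>N. a \<bullet> z = 0" for z
    proof (rule ccontr)
      assume "z \<noteq> 0"
      hence "(1/norm z) *\<^sub>R z \<in> T" using that unfolding T_def by (simp add: inner_scaleR_right)
      thus False using True by auto
    qed
    hence "\<forall>z. (\<forall>a\<in>N. a \<bullet> z = 0) \<longrightarrow> 1 * (norm z)^2 \<le> Re (sq M z z)"
    proof (intro allI impI)
      fix z assume "\<forall>a\<in>N. a \<bullet> z = 0"
      hence "z = 0" using \<open>\<And>z. \<forall>a\<in>N. a \<bullet> z = 0 \<Longrightarrow> z = 0\<close> by blast
      thus "1 * (norm z)^2 \<le> Re (sq M z z)" by (simp add: sq_def)
    qed
    thus ?thesis by (intro exI[of _ "1::real"]) auto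
  next
    case False
    obtain z0 where z0: "z0 \<in> T" and mn: "\<forall>y\<in>T. Re (sq M z0 z0) \<le> Re (sq M y y)"
      using continuous_attains_inf[OF cT False cont_sq] by blast
    have "Re (sq M z0 z0) \<noteq> 0"
    proof
      assume "Re (sq M z0 z0) = 0"
      hence "z0 \<in> N" using psd_zero_ker[OF P] unfolding N_def by blast
      hence "z0 \<bullet> z0 = 0" using z0 unfolding T_def by blast
      thus False using z0 unfolding T_def by simp
    qed
    hence cpos: "Re (sq M z0 z0) > 0" using pos[of z0] by linarith
    show ?thesis
    proof (intro exI[of _ "Re (sq M z0 z0)"] conjI allI impI cpos)
      fix z assume orth: "\<forall>a\<in>N. a \<bullet> z = 0"
      show "Re (sq M z0 z0) * (norm z)^2 \<le> Re (sq M z z)"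
      proof (cases "z = 0")
        case True thus ?thesis using pos[of z] by simp
      next
        case False
        hence nz: "norm z > 0" by simp
        have "(1/norm z) *\<^sub>R z \<in> T" using orth False unfolding T_def by (simp add: inner_scaleR_right)
        hence "Re (sq M z0 z0) \<le> (1/norm z)^2 * Re (sq M z z)" using mn sq_scale_both by metis
        hence "Re (sq M z0 z0) * (norm z)^2 \<le> (1/norm z)^2 * Re (sq M z z) * (norm z)^2"
          by (simp add: mult_right_mono)
        also have "\<dots> = Re (sq M z z)" using nz by (simp add: field_simps)
        finally show ?thesis .
      qed
    qed
  qed
  then obtain c where c: "c > 0" and cz: "\<And>z. (\<forall>a\<in>N. a \<bullet> z = 0) \<Longrightarrow> c * (norm z)^2 \<le> Re (sq M z z)"
    by blast
  define e where "e = c / ((norm w)^2 + 1)"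
  have e0: "e > 0" unfolding e_def using c by (simp add: add_nonneg_pos)
  have "e * (cmod (wsum w v))^2 \<le> Re (sq M v v)" for v
  proof -
    obtain y z where y: "y \<in> span N" and z: "\<And>a. a \<in> span N \<Longrightarrow> orthogonal z a" and v: "v = y + z"
      by (rule orthogonal_subspace_decomp_exists[of N v]) blast
    have "y \<in> N" using y subN by (metis span_eq_iff)
    hence yN: "M *v y = 0" unfolding N_def by simp
    have zo: "\<forall>a\<in>N. a \<bullet> z = 0" using z span_base by (metis inner_commute orthogonal_def)
    have s1: "sq M z y = 0" "sq M y y = 0" using yN by (simp_all add: sq_ker)
    have s2: "sq M y z = 0" using sq_herm[OF H, of y z] s1 by simp
    have sv: "sq M v v = sq M z z" unfolding v by (simp add: sq_add_left sq_add_right s1 s2)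
    have wv: "wsum w v = wsum w z" unfolding v wsum_add using W yN by simp
    have A: "(cmod (wsum w v))^2 \<le> (norm w)^2 * (norm z)^2"
      unfolding wv power_mult_distrib[symmetric] by (rule power_mono[OF wsum_bound]) simp
    have B: "c * (norm z)^2 \<le> Re (sq M v v)" unfolding sv by (rule cz[OF zo])
    have "e * (cmod (wsum w v))^2 \<le> e * ((norm w)^2 * (norm z)^2)"
      using A e0 by (simp add: mult_left_mono)
    also have "\<dots> = c * (norm z)^2 * ((norm w)^2 / ((norm w)^2 + 1))"
      unfolding e_def by (simp add: field_simps)
    also have "\<dots> \<le> c * (norm z)^2 * 1"
    proof (intro mult_left_mono)
      have "0 < (norm w)^2 + 1" by (simp add: add_nonneg_pos)
      thus "(norm w)^2 / ((norm w)^2 + 1) \<le> 1" by (simp add: divide_le_eq)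
    qed (use c in simp)
    finally show ?thesis using B by simp
  qed
  thus ?thesis using e0 by blast
qed

lemma herm_iJ: "hermitian_mat (minus_iJ g J) \<longleftrightarrow> (\<forall>i j. g$j$i = g$i$j \<and> J$j$i = - J$i$j)"
proof -
  have "(- J$j$i = J$i$j) \<longleftrightarrow> (J$j$i = - J$i$j)" for i j by auto
  thus ?thesis unfolding hermitian_mat_def minus_iJ_def by (simp add: complex_eq_iff)
qed

lemma conj_flip:
  assumes "psd_complex (minus_iJ g J)"
  shows "psd_complex (minus_iJ g (-J))"
proof -
  have h: "\<And>i j. g$j$i = g$i$j \<and> J$j$i = - J$i$j" using assms unfolding psd_complex_sq herm_iJ by blast
  have "g$j$i = g$i$j \<and> (-J)$j$i = - ((-J)$i$j)" for i j using h[of i j] by simp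
  hence H: "hermitian_mat (minus_iJ g (-J))" unfolding herm_iJ by blast
  have e: "sq (minus_iJ g (-J)) v v = cnj (sq (minus_iJ g J) (\<chi> i. cnj (v$i)) (\<chi> i. cnj (v$i)))" for v
    by (simp add: sq_def minus_iJ_def cnj_sum)
  show ?thesis using assms H unfolding psd_complex_sq e by simp
qed

definition blk :: "nat \<Rightarrow> complex^6 \<Rightarrow> complex^2" where
  "blk k v = (\<chi> p. if p = 0 then v $ of_nat (2*k) else v $ of_nat (2*k+1))"

lemma dsum3_sq:
  "sq (minus_iJ (dsum3 a b c) (dsum3 a' b' c')) v v =
     sq (minus_iJ a a') (blk 0 v) (blk 0 v) + sq (minus_iJ b b') (blk 1 v) (blk 1 v)
   + sq (minus_iJ c c') (blk 2 v) (blk 2 v)"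
  unfolding sq_def sum_6 sum_2' minus_iJ_def dsum3_def mode_of_def pos_of_def blk_def
  by (simp add: algebra_simps)

lemma dsum3_sym:
  assumes "\<forall>p q. a$q$p = a$p$q" "\<forall>p q. b$q$p = b$p$q" "\<forall>p q. c$q$p = c$p$q"
  shows "dsum3 a b c $ j $ i = dsum3 a b c $ i $ j"
proof (cases "mode_of i = mode_of j")
  case True
  show ?thesis unfolding dsum3_def using True assms(1)[rule_format, of "pos_of i" "pos_of j"]
    assms(2)[rule_format, of "pos_of i" "pos_of j"] assms(3)[rule_format, of "pos_of i" "pos_of j"] by simp
next
  case False thus ?thesis unfolding dsum3_def by auto
qed

lemma dsum3_asym:
  assumes "\<forall>p q. a$q$p = - a$p$q" "\<forall>p q. b$q$p = - b$p$q" "\<forall>p q. c$q$p = - c$p$q"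
  shows "dsum3 a b c $ j $ i = - dsum3 a b c $ i $ j"
proof (cases "mode_of i = mode_of j")
  case True
  show ?thesis unfolding dsum3_def using True assms(1)[rule_format, of "pos_of i" "pos_of j"]
    assms(2)[rule_format, of "pos_of i" "pos_of j"] assms(3)[rule_format, of "pos_of i" "pos_of j"] by simp
next
  case False thus ?thesis unfolding dsum3_def by auto
qed

lemma dsum3_psd:
  assumes A: "psd_complex (minus_iJ a a')" and B: "psd_complex (minus_iJ b b')"
    and C: "psd_complex (minus_iJ c c')"
  shows "psd_complex (minus_iJ (dsum3 a b c) (dsum3 a' b' c'))"
proof -
  have hA: "\<forall>p q. a$q$p = a$p$q \<and> a'$q$p = - a'$p$q" using A unfolding psd_complex_sq herm_iJ by blast
  have hB: "\<forall>p q. b$q$p = b$p$q \<and> b'$q$p = - b'$p$q" using B unfolding psd_complex_sq herm_iJ by blast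
  have hC: "\<forall>p q. c$q$p = c$p$q \<and> c'$q$p = - c'$p$q" using C unfolding psd_complex_sq herm_iJ by blast
  have s: "dsum3 a b c $ j $ i = dsum3 a b c $ i $ j" for i j
    by (rule dsum3_sym) (use hA hB hC in blast)+
  have t: "dsum3 a' b' c' $ j $ i = - dsum3 a' b' c' $ i $ j" for i j
    by (rule dsum3_asym) (use hA hB hC in blast)+
  have H: "hermitian_mat (minus_iJ (dsum3 a b c) (dsum3 a' b' c'))"
    unfolding herm_iJ using s t by blast
  have ra: "0 \<le> Re (sq (minus_iJ a a') u u)" for u using A unfolding psd_complex_sq by blast
  have rb: "0 \<le> Re (sq (minus_iJ b b') u u)" for u using B unfolding psd_complex_sq by blast
  have rc: "0 \<le> Re (sq (minus_iJ c c') u u)" for u using C unfolding psd_complex_sq by blast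
  have "0 \<le> Re (sq (minus_iJ (dsum3 a b c) (dsum3 a' b' c')) v v)" for v
    unfolding dsum3_sq plus_complex.sel using ra[of "blk 0 v"] rb[of "blk 1 v"] rc[of "blk 2 v"] by linarith
  with H show ?thesis unfolding psd_complex_sq by blast
qed

lemma prod_PPT:
  assumes "one_mode_CM gA" "one_mode_CM gB" "one_mode_CM gC"
  shows "psd_complex (minus_iJ (dsum3 gA gB gC) (Jt x))"
proof -
  have p: "psd_complex (minus_iJ g J1)" "psd_complex (minus_iJ g (-J1))" if "one_mode_CM g" for g
    using that conj_flip unfolding one_mode_CM_def is_CM_def by auto
  show ?thesis using assms
  proof (cases x)
    case X0 thus ?thesis using assms by (simp add: dsum3_psd p)
  next
    case XA thus ?thesis using assms by (simp add: dsum3_psd p)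
  next
    case XB thus ?thesis using assms by (simp add: dsum3_psd p)
  next
    case XC thus ?thesis using assms by (simp add: dsum3_psd p)
  qed
qed

lemma psd_real_0: "psd_real (0::real^'n^'n)"
  by (simp add: psd_real_def symmetric_mat_def transpose_def vec_eq_iff)

lemma rank1_sq:
  "sq (cm (\<chi> i j. e * w$i * w$j)) v v = of_real (e * (cmod (wsum w v))^2)"
proof -
  have "sq (cm (\<chi> i j. e * w$i * w$j)) v v = of_real e * (cnj (wsum w v) * wsum w v)"
    by (simp add: sq_def cm_def wsum_def cnj_sum sum_product sum_distrib_left mult_ac)
  also have "\<dots> = of_real (e * (cmod (wsum w v))^2)"
    by (simp only: of_real_mult complex_norm_square mult.commute)
  finally show ?thesis .
qed

lemma rank1_psd:
  assumes "e > 0" "w \<noteq> 0"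
  shows "symmetric_mat (\<chi> i j. e * w$i * w$j)" "psd_real (\<chi> i j. e * w$i * w$j)"
    "(\<chi> i j. e * w$i * w$j) \<noteq> 0"
proof -
  show s: "symmetric_mat (\<chi> i j. e * w$i * w$j)"
    by (simp add: symmetric_mat_def transpose_def vec_eq_iff mult_ac)
  have "x \<bullet> ((\<chi> i j. e * w$i * w$j) *v x) = e * (w \<bullet> x)^2" for x
    by (simp add: inner_vec_def matrix_vector_mult_def power2_eq_square sum_product sum_distrib_left mult_ac)
  thus "psd_real (\<chi> i j. e * w$i * w$j)" using s assms(1) unfolding psd_real_def by simp
  obtain i where "w$i \<noteq> 0" using assms(2) by (auto simp: vec_eq_iff)
  show "(\<chi> i j. e * w$i * w$j) \<noteq> 0"
  proof
    assume "(\<chi> i j. e * w$i * w$j) = 0"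
    hence "(\<chi> i j. e * w$i * w$j) $ i $ i = 0" by simp
    thus False using assms(1) \<open>w$i \<noteq> 0\<close> by simp
  qed
qed

theorem theorem4:
  fixes g :: "real^6^6"
  assumes "three_mode_CM g"
    and "\<forall>x. psd_complex (minus_iJ g (Jt x))"
  shows "edge_CM g \<longleftrightarrow>
    ((\<not> (\<exists>gA gB gC. one_mode_CM gA \<and> one_mode_CM gB \<and> one_mode_CM gC \<and> g = dsum3 gA gB gC))
     \<and> K_space g = UNIV)"
proof
  assume E: "edge_CM g"
  hence NS: "\<not> fully_separable g"
    and Edge: "\<forall>P. symmetric_mat P \<and> psd_real P \<and> P \<noteq> 0 \<longrightarrow> (\<exists>x. \<not> psd_complex (minus_iJ (g - P) (Jt x)))"
    unfolding edge_CM_def by auto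
  have np: "\<not> (\<exists>gA gB gC. one_mode_CM gA \<and> one_mode_CM gB \<and> one_mode_CM gC \<and> g = dsum3 gA gB gC)"
  proof
    assume "\<exists>gA gB gC. one_mode_CM gA \<and> one_mode_CM gB \<and> one_mode_CM gC \<and> g = dsum3 gA gB gC"
    then obtain gA gB gC where "one_mode_CM gA" "one_mode_CM gB" "one_mode_CM gC" "g = dsum3 gA gB gC"
      by blast
    hence "fully_separable g" unfolding fully_separable_def
      by (intro exI[of _ gA] exI[of _ gB] exI[of _ gC]) (simp add: psd_real_0)
    thus False using NS by blast
  qed
  have "K_space g = UNIV"
  proof (rule ccontr)
    assume nK: "K_space g \<noteq> UNIV"
    let ?S = "re_vec ` V_space g \<union> im_vec ` V_space g"
    have "span ?S \<subset> span (UNIV::(real^6) set)" using nK unfolding K_space_def by auto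
    then obtain w where w0: "w \<noteq> 0" and wo: "\<And>y. y \<in> span ?S \<Longrightarrow> orthogonal w y"
      by (rule orthogonal_to_subspace_exists_gen) blast
    have Wx: "\<forall>v. minus_iJ g (Jt x) *v v = 0 \<longrightarrow> wsum w v = 0" for x
    proof (intro allI impI)
      fix v assume "minus_iJ g (Jt x) *v v = 0"
      hence "v \<in> V_space g" unfolding V_space_def ker_c_def by (intro vec.span_base) auto
      hence "re_vec v \<in> span ?S" "im_vec v \<in> span ?S" by (auto intro: span_base)
      hence "w \<bullet> re_vec v = 0" "w \<bullet> im_vec v = 0" using wo orthogonal_def by auto
      thus "wsum w v = 0"
        by (simp add: wsum_def complex_eq_iff inner_vec_def re_vec_def im_vec_def Re_sum Im_sum)
    qed
    have "\<forall>x. \<exists>e>0. \<forall>v. e * (cmod (wsum w v))^2 \<le> Re (sq (minus_iJ g (Jt x)) v v)"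
      using eps_bound assms(2) Wx by blast
    then obtain ef where ef: "\<And>x. ef x > 0"
      and efb: "\<And>x v. ef x * (cmod (wsum w v))^2 \<le> Re (sq (minus_iJ g (Jt x)) v v)"
      by metis
    define e where "e = min (min (ef X0) (ef XA)) (min (ef XB) (ef XC))"
    have e0: "e > 0" unfolding e_def using ef by simp
    have ele: "e \<le> ef x" for x unfolding e_def by (cases x) auto
    define P :: "real^6^6" where "P = (\<chi> i j. e * w$i * w$j)"
    have P: "symmetric_mat P" "psd_real P" "P \<noteq> 0" unfolding P_def using rank1_psd[OF e0 w0] by auto
    have "psd_complex (minus_iJ (g - P) (Jt x))" for x
    proof -
      have H: "hermitian_mat (minus_iJ (g - P) (Jt x))" unfolding minus_iJ_diff
        using assms(2) herm_diff herm_cm P(1) psd_complex_sq by blast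
      have "0 \<le> Re (sq (minus_iJ (g - P) (Jt x)) v v)" for v
      proof -
        have "e * (cmod (wsum w v))^2 \<le> ef x * (cmod (wsum w v))^2"
          using ele[of x] by (simp add: mult_right_mono)
        also have "\<dots> \<le> Re (sq (minus_iJ g (Jt x)) v v)" by (rule efb)
        finally show ?thesis
          unfolding minus_iJ_diff sq_diff_mat P_def rank1_sq by simp
      qed
      with H show ?thesis unfolding psd_complex_sq by blast
    qed
    thus False using Edge P by blast
  qed
  with np show "(\<not> (\<exists>gA gB gC. one_mode_CM gA \<and> one_mode_CM gB \<and> one_mode_CM gC \<and> g = dsum3 gA gB gC))
     \<and> K_space g = UNIV" by blast
next
  assume R: "(\<not> (\<exists>gA gB gC. one_mode_CM gA \<and> one_mode_CM gB \<and> one_mode_CM gC \<and> g = dsum3 gA gB gC))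
     \<and> K_space g = UNIV"
  hence K: "K_space g = UNIV" by blast
  have NS: "\<not> fully_separable g"
  proof
    assume "fully_separable g"
    then obtain gA gB gC where o: "one_mode_CM gA" "one_mode_CM gB" "one_mode_CM gC"
      and ps: "psd_real (g - dsum3 gA gB gC)" unfolding fully_separable_def by blast
    have "\<forall>x. psd_complex (minus_iJ (g - (g - dsum3 gA gB gC)) (Jt x))"
      using prod_PPT[OF o] by simp
    hence "g - dsum3 gA gB gC = 0" using K_kills[OF K ps] by blast
    hence "g = dsum3 gA gB gC" by simp
    thus False using R o by blast
  qed
  have "\<forall>P. symmetric_mat P \<and> psd_real P \<and> P \<noteq> 0 \<longrightarrow> (\<exists>x. \<not> psd_complex (minus_iJ (g - P) (Jt x)))"
    using K_kills[OF K] by blast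
  thus "edge_CM g" unfolding edge_CM_def using assms NS by blast
qed

end
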